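(* Let $R$ be an $n\times n$ irreducible nonnegative matrix with positive left and right eigenvectors $u$ and $v$ for the PF eigenvalue $1$, normalized so that $\langle u,v\rangle=1$. Define $A=D_u^{1/2}D_v^{-1/2}RD_u^{-1/2}D_v^{1/2}$. Then: (1) $\phi(A)=\phi(R)$; (2) $\lambda_i(A)=\lambda_i(R)$ for every $i$; (3) $\|A\|_2=1$; (4) if $R$ is reversible, i.e. $D_uRD_v=D_vR^TD_u$, then $A$ is symmetric.
   Context: $D_x$ denotes the diagonal matrix with the vector $x$ on its diagonal; square roots are entrywise positive. $\|\cdot\|_2$ is the operator norm. For an irreducible nonnegative $H$ with positive PF left/right eigenvectors $u',v'$ (for $A$ these are both $w=D_u^{1/2}D_v^{1/2}\mathbf 1$), the edge expansion is $\phi(H)=\min\phi_S(H)$ over nonempty $S\subseteq[n]$ with $\sum_{i\in S}u'_iv'_i\le\frac12\sum_iu'_iv'_i$, where $\phi_S(H)=\langle\mathbf 1_S,D_{u'}HD_{v'}\mathbf 1_{\overline S}\rangle/\langle\mathbf 1_S,D_{u'}HD_{v'}\mathbf 1\rangle$ and $\mathbf 1_S$ is the indicator vector of $S$. Eigenvalues are listed as $\lambda_1>\operatorname{Re}\lambda_2\ge\dots\ge\operatorname{Re}\lambda_n$. *)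

theory Defs
  imports "HOL-Analysis.Analysis" "HOL-Computational_Algebra.Polynomial"
begin

definition diagm :: "real^'n \<Rightarrow> real^'n^'n" where
  "diagm x = (\<chi> i j. if i = j then x$i else 0)"

definition nonneg_mat :: "real^'n^'n \<Rightarrow> bool" where
  "nonneg_mat H \<longleftrightarrow> (\<forall>i j. H$i$j \<ge> 0)"

definition matpow :: "real^'n^'n \<Rightarrow> nat \<Rightarrow> real^'n^'n" where
  "matpow H k = (((**) H) ^^ k) (mat 1)"

definition irreducible_mat :: "real^'n^'n \<Rightarrow> bool" where
  "irreducible_mat H \<longleftrightarrow> (\<forall>i j. \<exists>k. matpow H k $i$j > 0)"

definition phiS :: "real^'n^'n \<Rightarrow> real^'n \<Rightarrow> real^'n \<Rightarrow> 'n set \<Rightarrow> real" where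
  "phiS H u' v' S =
     (\<Sum>i\<in>S. \<Sum>j\<in>-S. u'$i * H$i$j * v'$j) / (\<Sum>i\<in>S. \<Sum>j\<in>UNIV. u'$i * H$i$j * v'$j)"

definition edge_expansion :: "real^'n^'n \<Rightarrow> real^'n \<Rightarrow> real^'n \<Rightarrow> real" where
  "edge_expansion H u' v' =
     Min {phiS H u' v' S | S. S \<noteq> {} \<and>
            (\<Sum>i\<in>S. u'$i * v'$i) \<le> (1/2) * (\<Sum>i\<in>UNIV. u'$i * v'$i)}"

definition charpoly :: "real^'n^'n \<Rightarrow> complex poly" where
  "charpoly H = det (\<chi> i j. (if i = j then [:0, 1:] else 0) - [:complex_of_real (H$i$j):])"

definition eigenvalues :: "real^'n^'n \<Rightarrow> complex multiset" where
  "eigenvalues H = proots (charpoly H)"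

end

theory Submission
  imports Defs
begin

lemma det_scale_rc:
  fixes M :: "'a::comm_ring_1^'n^'n"
  shows "det (\<chi> i j. c i * M$i$j * e j) = prod c UNIV * prod e UNIV * det M"
proof -
  have 1: "(\<chi> i j. c i * M$i$j * e j) = (\<chi> i. c i *s (\<chi> j. M$i$j * e j))"
    by (simp add: vec_eq_iff mult.assoc)
  have 2: "transpose (\<chi> i j. M$i$j * e j) = (\<chi> j. e j *s (transpose M)$j)"
    by (simp add: vec_eq_iff transpose_def mult.commute)
  have "det (\<chi> i j. M$i$j * e j) = det (transpose (\<chi> i j. M$i$j * e j))" by simp
  also have "\<dots> = prod e UNIV * det (\<chi> j. (transpose M)$j)"
    unfolding 2 det_rows_mul ..
  also have "\<dots> = prod e UNIV * det M" by simp
  finally have 3: "det (\<chi> i j. M$i$j * e j) = prod e UNIV * det M" .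
  show ?thesis unfolding 1 det_rows_mul
    using 3 by (simp add: mult.assoc)
qed

lemma diagm_left: "diagm x ** M = (\<chi> i j. x$i * M$i$j)"
proof -
  have "(\<Sum>k\<in>UNIV. (if i = k then x$i else 0) * M$k$j) = x$i * M$i$j" for i j
    by (simp add: if_distrib[of "\<lambda>z. z * _"] cong: if_cong)
  then show ?thesis by (simp add: vec_eq_iff matrix_matrix_mult_def diagm_def)
qed

lemma diagm_right: "M ** diagm x = (\<chi> i j. M$i$j * x$j)"
proof -
  have "(\<Sum>k\<in>UNIV. M$i$k * (if k = j then x$k else 0)) = M$i$j * x$j" for i j
    by (simp add: if_distrib[of "\<lambda>z. _ * z"] cong: if_cong)
  then show ?thesis by (simp add: vec_eq_iff matrix_matrix_mult_def diagm_def)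
qed

lemma diagm_diagm: "diagm x ** diagm y = diagm (\<chi> i. x$i * y$i)"
  unfolding diagm_left by (simp add: diagm_def vec_eq_iff)

lemma const_mult_poly: "[:k:] * p * [:l:] = smult (k * l) p"
  by (simp add: mult.commute)

theorem lemma3p3:
  fixes R :: "real^'n^'n" and u v :: "real^'n"
  assumes "nonneg_mat R" and "irreducible_mat R"
    and "\<forall>i. u$i > 0" and "\<forall>i. v$i > 0"
    and "R *v v = v" and "u v* R = u"
    and "u \<bullet> v = 1"
  defines "A \<equiv> diagm (\<chi> i. sqrt (u$i)) ** diagm (\<chi> i. 1 / sqrt (v$i)) ** R
                 ** diagm (\<chi> i. 1 / sqrt (u$i)) ** diagm (\<chi> i. sqrt (v$i))"
    and "w \<equiv> (\<chi> i. sqrt (u$i) * sqrt (v$i))"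
  shows "edge_expansion A w w = edge_expansion R u v
         \<and> eigenvalues A = eigenvalues R
         \<and> onorm (\<lambda>x. A *v x) = 1
         \<and> (diagm u ** R ** diagm v = diagm v ** transpose R ** diagm u \<longrightarrow> transpose A = A)"
proof -
  define a where "a i = sqrt (u$i)" for i
  define b where "b i = sqrt (v$i)" for i
  have apos: "a i > 0" for i using assms(3) by (simp add: a_def)
  have bpos: "b i > 0" for i using assms(4) by (simp add: b_def)
  have anz: "a i \<noteq> 0" for i using apos[of i] by simp
  have bnz: "b i \<noteq> 0" for i using bpos[of i] by simp
  have ua: "u$i = a i * a i" for i using assms(3)[rule_format, of i] by (simp add: a_def)
  have vb: "v$i = b i * b i" for i using assms(4)[rule_format, of i] by (simp add: b_def)
  have Rnn: "R$i$j \<ge> 0" for i j using assms(1) by (simp add: nonneg_mat_def)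
  have Aij: "A$i$j = a i / b i * R$i$j * (b j / a j)" for i j
    unfolding A_def diagm_diagm unfolding diagm_left diagm_right using apos[of i] bpos[of i] apos[of j] bpos[of j]
    by (simp add: a_def b_def)
  have wi: "w$i = a i * b i" for i by (simp add: w_def a_def b_def)
  have Ann: "A$i$j \<ge> 0" for i j
    unfolding Aij using apos[of i] bpos[of i] apos[of j] bpos[of j] Rnn[of i j] by simp
  have Rrow: "(\<Sum>j\<in>UNIV. R$i$j * v$j) = v$i" for i
    using assms(5) by (simp add: vec_eq_iff matrix_vector_mult_def)
  have Rcol: "(\<Sum>i\<in>UNIV. u$i * R$i$j) = u$j" for j
    using assms(6) by (simp add: vec_eq_iff vector_matrix_mult_def)
  have Arow: "(\<Sum>j\<in>UNIV. A$i$j * w$j) = w$i" for i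
  proof -
    have "(\<Sum>j\<in>UNIV. A$i$j * w$j) = (\<Sum>j\<in>UNIV. a i / b i * (R$i$j * v$j))"
      unfolding Aij wi vb by (intro sum.cong) (auto simp: field_simps anz bnz)
    also have "\<dots> = a i / b i * v$i" by (simp only: sum_distrib_left[symmetric] Rrow)
    also have "\<dots> = w$i" unfolding wi vb using bpos[of i] by (simp add: field_simps)
    finally show ?thesis .
  qed
  have Acol: "(\<Sum>i\<in>UNIV. w$i * A$i$j) = w$j" for j
  proof -
    have "(\<Sum>i\<in>UNIV. w$i * A$i$j) = (\<Sum>i\<in>UNIV. (u$i * R$i$j) * (b j / a j))"
      unfolding Aij wi ua by (intro sum.cong) (auto simp: field_simps anz bnz)
    also have "\<dots> = u$j * (b j / a j)" by (simp only: sum_distrib_right[symmetric] Rcol)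
    also have "\<dots> = w$j" unfolding wi ua using apos[of j] by (simp add: field_simps)
    finally show ?thesis .
  qed
  have e1: "edge_expansion A w w = edge_expansion R u v"
  proof -
    have k1: "w$i * A$i$j * w$j = u$i * R$i$j * v$j" for i j
      unfolding Aij wi ua vb by (simp add: field_simps anz bnz)
    have k2: "w$i * w$i = u$i * v$i" for i
      unfolding wi ua vb by (simp add: field_simps)
    show ?thesis unfolding edge_expansion_def phiS_def k1 k2 ..
  qed
  have e2: "eigenvalues A = eigenvalues R"
  proof -
    define c where "c i = [:complex_of_real (a i / b i):]" for i
    define e where "e i = [:complex_of_real (b i / a i):]" for i
    define MR where "MR = (\<chi> i j. (if i = j then [:0, 1:] else 0) - [:complex_of_real (R$i$j):])"
    have ent: "(if i = j then [:0, 1:] else 0) - [:complex_of_real (A$i$j):] = c i * MR$i$j * e j" for i j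
    proof -
      define K where "K = a i / b i * (b j / a j)"
      have AK: "A$i$j = K * R$i$j" unfolding Aij K_def by simp
      have cK: "c i * MR$i$j * e j = smult (complex_of_real K) (MR$i$j)"
        unfolding c_def e_def const_mult_poly K_def of_real_mult ..
      show "(if i = j then [:0, 1:] else 0) - [:complex_of_real (A$i$j):] = c i * MR$i$j * e j"
      proof (cases "i = j")
        case True
        have "K = 1" unfolding K_def True using anz[of j] bnz[of j] by simp
        then show ?thesis unfolding cK unfolding AK MR_def using True by simp
      next
        case False
        then show ?thesis unfolding cK unfolding AK MR_def by simp
      qed
    qed
    have "(\<chi> i j. (if i = j then [:0, 1:] else 0) - [:complex_of_real (A$i$j):])
        = (\<chi> i j. c i * MR$i$j * e j)"
      by (intro iffD2[OF vec_eq_iff] allI) (simp only: vec_lambda_beta ent)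
    then have "charpoly A = det (\<chi> i j. c i * MR$i$j * e j)"
      unfolding charpoly_def by (simp only:)
    also have "\<dots> = prod c UNIV * prod e UNIV * det MR" by (rule det_scale_rc)
    also have "det MR = charpoly R" by (simp add: charpoly_def MR_def)
    finally have cp: "charpoly A = prod c UNIV * prod e UNIV * charpoly R" .
    have ce: "c i * e i = 1" for i
    proof -
      have "a i / b i * (b i / a i) = 1" using apos[of i] bpos[of i] by simp
      then show "c i * e i = 1" unfolding c_def e_def
        by (metis const_mult_poly mult.right_neutral of_real_1 of_real_mult smult_1_left)
    qed
    have p1: "prod c UNIV * prod e UNIV = 1"
      by (simp add: prod.distrib[symmetric] ce)
    show ?thesis unfolding eigenvalues_def using cp p1 by simp
  qed
  have wpos: "w$i > 0" for i unfolding wi using apos bpos by simp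
  have wnz: "w$i \<noteq> 0" for i using wpos[of i] by simp
  have Aw: "A *v w = w" using Arow by (simp add: vec_eq_iff matrix_vector_mult_def)
  have bound: "norm (A *v x) \<le> 1 * norm x" for x
  proof -
    have ci: "(A *v x)$i ^ 2 \<le> w$i * (\<Sum>j\<in>UNIV. A$i$j * (x$j)^2 / w$j)" for i
    proof -
      define p where "p = (\<chi> j. sqrt (A$i$j * w$j))"
      define q where "q = (\<chi> j. sqrt (A$i$j / w$j) * x$j)"
      have "p \<bullet> q = (\<Sum>j\<in>UNIV. A$i$j * x$j)"
        unfolding p_def q_def inner_vec_def
      proof (rule sum.cong)
        fix j
        have "sqrt (A$i$j * w$j) * sqrt (A$i$j / w$j) = sqrt ((A$i$j)^2)"
          using wpos[of j] by (simp add: real_sqrt_mult[symmetric] power2_eq_square)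
        also have "\<dots> = A$i$j" using Ann[of i j] by simp
        finally show "(\<chi> j. sqrt (A$i$j * w$j))$j \<bullet> (\<chi> j. sqrt (A$i$j / w$j) * x$j)$j = A$i$j * x$j"
          by (simp add: mult.assoc[symmetric])
      qed simp
      moreover have "p \<bullet> p = w$i"
        unfolding p_def inner_vec_def using Ann wpos Arow[of i]
        by (simp add: less_imp_le)
      moreover have "q \<bullet> q = (\<Sum>j\<in>UNIV. A$i$j * (x$j)^2 / w$j)"
        unfolding q_def inner_vec_def
      proof (rule sum.cong[OF refl])
        fix j
        have "A$i$j / w$j \<ge> 0" using Ann[of i j] wpos[of j] by simp
        then have "sqrt (A$i$j / w$j) * sqrt (A$i$j / w$j) = A$i$j / w$j"
          by (metis real_sqrt_mult_self abs_of_nonneg)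
        then show "(\<chi> j. sqrt (A$i$j / w$j) * x$j)$j \<bullet> (\<chi> j. sqrt (A$i$j / w$j) * x$j)$j
             = A$i$j * (x$j)^2 / w$j"
          by (simp add: power2_eq_square algebra_simps)
      qed
      ultimately show ?thesis using Cauchy_Schwarz_ineq[of p q]
        by (simp add: matrix_vector_mult_def)
    qed
    have "(norm (A *v x))^2 = (\<Sum>i\<in>UNIV. (A *v x)$i ^ 2)"
      unfolding power2_norm_eq_inner inner_vec_def by (simp add: power2_eq_square)
    also have "\<dots> \<le> (\<Sum>i\<in>UNIV. w$i * (\<Sum>j\<in>UNIV. A$i$j * (x$j)^2 / w$j))"
      by (rule sum_mono) (rule ci)
    also have "\<dots> = (\<Sum>j\<in>UNIV. (\<Sum>i\<in>UNIV. w$i * A$i$j) * ((x$j)^2 / w$j))"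
    proof -
      have "(\<Sum>i\<in>UNIV. w$i * (\<Sum>j\<in>UNIV. A$i$j * (x$j)^2 / w$j))
          = (\<Sum>i\<in>UNIV. \<Sum>j\<in>UNIV. w$i * A$i$j * ((x$j)^2 / w$j))"
        by (simp add: sum_distrib_left mult.assoc)
      also have "\<dots> = (\<Sum>j\<in>UNIV. \<Sum>i\<in>UNIV. w$i * A$i$j * ((x$j)^2 / w$j))"
        by (rule sum.swap)
      also have "\<dots> = (\<Sum>j\<in>UNIV. (\<Sum>i\<in>UNIV. w$i * A$i$j) * ((x$j)^2 / w$j))"
        by (simp only: sum_distrib_right)
      finally show ?thesis .
    qed
    also have "\<dots> = (\<Sum>j\<in>UNIV. (x$j)^2)"
    proof (rule sum.cong[OF refl])
      fix j
      show "(\<Sum>i\<in>UNIV. w$i * A$i$j) * ((x$j)^2 / w$j) = (x$j)^2"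
        unfolding Acol using wnz[of j] by simp
    qed
    also have "\<dots> = (norm x)^2"
      unfolding power2_norm_eq_inner inner_vec_def by (simp add: power2_eq_square)
    finally have "(norm (A *v x))^2 \<le> (norm x)^2" .
    from power2_le_imp_le[OF this norm_ge_zero] show ?thesis by simp
  qed
  have e3: "onorm (\<lambda>x. A *v x) = 1"
  proof (rule antisym)
    show "onorm (\<lambda>x. A *v x) \<le> 1" by (rule onorm_le) (rule bound)
    have "norm (A *v w) \<le> onorm (\<lambda>x. A *v x) * norm w"
      by (rule onorm) simp
    moreover have "w \<noteq> 0"
    proof
      assume "w = 0"
      then have "w$i = 0" for i by simp
      then show False using wnz by blast
    qed
    ultimately show "1 \<le> onorm (\<lambda>x. A *v x)" unfolding Aw by simp
  qed
  have e4: "diagm u ** R ** diagm v = diagm v ** transpose R ** diagm u \<longrightarrow> transpose A = A"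
  proof
    assume h: "diagm u ** R ** diagm v = diagm v ** transpose R ** diagm u"
    have hij: "u$i * R$i$j * v$j = v$i * R$j$i * u$j" for i j
      using arg_cong[OF h, of "\<lambda>M. M$i$j"] by (simp add: diagm_left diagm_right transpose_def)
    show "transpose A = A"
    proof (simp add: vec_eq_iff transpose_def, intro allI)
      fix i j
      have "A$j$i = (u$j * R$j$i * v$i) / (a i * b i * a j * b j)"
        unfolding Aij ua vb by (simp add: field_simps anz bnz)
      also have "\<dots> = (u$i * R$i$j * v$j) / (a i * b i * a j * b j)" using hij[of i j] by simp
      also have "\<dots> = A$i$j"
        unfolding Aij ua vb by (simp add: field_simps anz bnz)
      finally show "A$j$i = A$i$j" .
    qed
  qed
  show ?thesis using e1 e2 e3 e4 by blast
qed
end
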